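(* Let $\theta>0$, $n\in\mathbb{N}$, let $a_1,\dots,a_n\in\mathbb{R}$ and $h(\sigma)=\sum_{j\le n}a_jk_j(\sigma)$ for $\sigma\in\mathbf{S}_n$. Then for every $k\in\mathbb{N}$, \[ \mathbf{E}_n h(\sigma)_{(k)}=\sum_{u=1}^k\theta^u\sum_{\substack{r_1+\cdots+r_u=k\\ r_i\ge1}}\binom{k-1}{r_1-1}\binom{k-r_1-1}{r_2-1}\cdots\binom{k-r_1-\cdots-r_{u-1}-1}{r_u-1}\sum_{\substack{j_1,\dots,j_u\ge1\\ j_1+\cdots+j_u\le n}}\frac{(a_{j_1})_{(r_1)}\cdots(a_{j_u})_{(r_u)}}{j_1\cdots j_u}\,\psi_n\big(n-(j_1+\cdots+j_u)\big). \]
   Context: $\mathbf{S}_n$ is the symmetric group; $k_j(\sigma)$ is the number of cycles of length $j$ of $\sigma$ and $w(\sigma)$ its number of cycles. The Ewens measure is $\nu_n(A)=\frac{1}{\theta^{(n)}}\sum_{\sigma\in A}\theta^{w(\sigma)}$, $\theta^{(n)}=\theta(\theta+1)\cdots(\theta+n-1)$ ($\theta^{(0)}=1$), and $\mathbf{E}_n$ denotes expectation with respect to $\nu_n$. $x_{(r)}=x(x-1)\cdots(x-r+1)$. For $0\le m\le n$, $\psi_n(m):=\frac{n!}{\theta^{(n)}}\cdot\frac{\theta^{(m)}}{m!}$. *)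

theory Defs
  imports "HOL-Analysis.Analysis" "HOL-Combinatorics.Combinatorics"
begin

definition Sn :: "nat \<Rightarrow> (nat \<Rightarrow> nat) set" where
  "Sn n = {\<sigma>. \<sigma> permutes {1..n}}"

definition cycles_of :: "nat \<Rightarrow> (nat \<Rightarrow> nat) \<Rightarrow> nat set set" where
  "cycles_of n \<sigma> = (\<lambda>x. orbit \<sigma> x) ` {1..n}"

definition kcyc :: "nat \<Rightarrow> nat \<Rightarrow> (nat \<Rightarrow> nat) \<Rightarrow> nat" where
  "kcyc n j \<sigma> = card {c \<in> cycles_of n \<sigma>. card c = j}"

definition wcyc :: "nat \<Rightarrow> (nat \<Rightarrow> nat) \<Rightarrow> nat" where
  "wcyc n \<sigma> = card (cycles_of n \<sigma>)"

text \<open>Expectation under the Ewens measure nu_n with parameter theta;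
  theta^(n) is the rising factorial, pochhammer theta n.\<close>
definition ewens_E :: "real \<Rightarrow> nat \<Rightarrow> ((nat \<Rightarrow> nat) \<Rightarrow> real) \<Rightarrow> real" where
  "ewens_E \<theta> n f = (\<Sum>\<sigma>\<in>Sn n. \<theta> ^ wcyc n \<sigma> * f \<sigma>) / pochhammer \<theta> n"

definition falling :: "real \<Rightarrow> nat \<Rightarrow> real" where
  "falling x r = (\<Prod>i<r. x - real i)"

definition psi :: "real \<Rightarrow> nat \<Rightarrow> nat \<Rightarrow> real" where
  "psi \<theta> n m = (fact n / pochhammer \<theta> n) * (pochhammer \<theta> m / fact m)"

end

theory Submission
  imports Defs "HOL-Computational_Algebra.Formal_Power_Series"
begin

definition cyc :: "'a set \<Rightarrow> ('a \<Rightarrow> 'a) \<Rightarrow> 'a set set" where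
  "cyc S \<sigma> = (\<lambda>x. orbit \<sigma> x) ` S"

definition CP :: "'a set \<Rightarrow> ('a \<Rightarrow> 'a) set" where
  "CP c = {\<rho>. \<rho> permutes c \<and> cyclic_on \<rho> c}"

lemma orbit_glue_c:
  assumes "\<rho> permutes c" "\<tau> permutes T" "c \<inter> T = {}" "x \<in> c"
  shows "orbit (\<rho> \<circ> \<tau>) x = orbit \<rho> x"
proof (rule orbit_cong0[where A=c, symmetric])
  show "x \<in> c" by fact
  show "\<rho> \<in> c \<rightarrow> c" using assms(1) by (auto simp: permutes_in_image)
  fix y assume "y \<in> c"
  then have "y \<notin> T" using assms(3) by auto
  then have "\<tau> y = y" using assms(2) by (simp add: permutes_not_in)
  then show "\<rho> y = (\<rho> \<circ> \<tau>) y" by simp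
qed

lemma orbit_glue_T:
  assumes "\<rho> permutes c" "\<tau> permutes T" "c \<inter> T = {}" "x \<in> T"
  shows "orbit (\<rho> \<circ> \<tau>) x = orbit \<tau> x"
proof (rule orbit_cong0[where A=T, symmetric])
  show "x \<in> T" by fact
  show "\<tau> \<in> T \<rightarrow> T" using assms(2) by (auto simp: permutes_in_image)
  fix y assume "y \<in> T"
  then have "\<tau> y \<in> T" using assms(2) by (simp add: permutes_in_image)
  then have "\<tau> y \<notin> c" using assms(3) by auto
  then have "\<rho> (\<tau> y) = \<tau> y" using assms(1) by (simp add: permutes_not_in)
  then show "\<tau> y = (\<rho> \<circ> \<tau>) y" by simp
qed

lemma glue_facts:
  assumes S: "finite S" "c \<subseteq> S" "c \<noteq> {}" and r: "\<rho> \<in> CP c" and t: "\<tau> permutes (S - c)"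
  shows "(\<rho> \<circ> \<tau>) permutes S"
    and "cyc S (\<rho> \<circ> \<tau>) = insert c (cyc (S - c) \<tau>)"
    and "c \<notin> cyc (S - c) \<tau>"
    and "perm_restrict (\<rho> \<circ> \<tau>) c = \<rho>"
    and "perm_restrict (\<rho> \<circ> \<tau>) (S - c) = \<tau>"
proof -
  have rp: "\<rho> permutes c" and rc: "cyclic_on \<rho> c" using r by (auto simp: CP_def)
  show "(\<rho> \<circ> \<tau>) permutes S"
    by (rule permutes_compose) (use rp t S in \<open>auto intro: permutes_subset\<close>)
  have oc: "orbit (\<rho> \<circ> \<tau>) x = c" if "x \<in> c" for x
    using orbit_glue_c[OF rp t _ that] orbit_cyclic_eq3[OF rc that] by auto
  have oT: "orbit (\<rho> \<circ> \<tau>) x = orbit \<tau> x" if "x \<in> S - c" for x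
    using orbit_glue_T[OF rp t _ that] by auto
  have "S = c \<union> (S - c)" using S by auto
  then have "cyc S (\<rho> \<circ> \<tau>) = (\<lambda>x. orbit (\<rho> \<circ> \<tau>) x) ` c \<union> (\<lambda>x. orbit (\<rho> \<circ> \<tau>) x) ` (S - c)"
    unfolding cyc_def by (metis image_Un)
  also have "(\<lambda>x. orbit (\<rho> \<circ> \<tau>) x) ` c = {c}" using oc S(3) by auto
  also have "(\<lambda>x. orbit (\<rho> \<circ> \<tau>) x) ` (S - c) = cyc (S - c) \<tau>"
    unfolding cyc_def using oT by auto
  finally show "cyc S (\<rho> \<circ> \<tau>) = insert c (cyc (S - c) \<tau>)" by (simp add: comp_def)
  show "c \<notin> cyc (S - c) \<tau>"
  proof
    assume "c \<in> cyc (S - c) \<tau>"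
    then obtain y where y: "y \<in> S - c" "c = orbit \<tau> y" by (auto simp: cyc_def)
    have "orbit \<tau> y \<subseteq> S - c" by (rule permutes_orbit_subset[OF t y(1)])
    then show False using y S(3) by auto
  qed
  show "perm_restrict (\<rho> \<circ> \<tau>) c = \<rho>"
    using rp t by (auto simp: fun_eq_iff perm_restrict_def permutes_not_in)
  show "perm_restrict (\<rho> \<circ> \<tau>) (S - c) = \<tau>"
  proof
    fix x show "perm_restrict (\<rho> \<circ> \<tau>) (S - c) x = \<tau> x"
    proof (cases "x \<in> S - c")
      case True
      then have "\<tau> x \<in> S - c" using t by (simp only: permutes_in_image)
      then have "\<rho> (\<tau> x) = \<tau> x" using rp by (simp add: permutes_not_in)
      then show ?thesis using True by (simp add: perm_restrict_def)
    next
      case False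
      then have "\<tau> x = x" using t by (simp add: permutes_not_in)
      then show ?thesis using False by (auto simp: perm_restrict_def)
    qed
  qed
qed

lemma split_facts:
  assumes S: "finite S" and s: "\<sigma> permutes S" and c: "c \<in> cyc S \<sigma>"
  shows "c \<subseteq> S" "c \<noteq> {}" "perm_restrict \<sigma> c \<in> CP c"
    "perm_restrict \<sigma> (S - c) permutes (S - c)"
    "perm_restrict \<sigma> c \<circ> perm_restrict \<sigma> (S - c) = \<sigma>"
proof -
  obtain x where x: "x \<in> S" "c = orbit \<sigma> x" using c by (auto simp: cyc_def)
  show cS: "c \<subseteq> S" using permutes_orbit_subset[OF s x(1)] x by simp
  show "c \<noteq> {}" using x orbit_nonempty[of \<sigma> x] by simp
  have cc: "cyclic_on \<sigma> c" using cyclic_on_orbit[OF s S] x by simp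
  have fc: "finite c" using cS S finite_subset by auto
  have inj: "inj_on \<sigma> c" using s by (meson permutes_inj inj_on_subset subset_UNIV)
  have "\<sigma> ` c \<subseteq> c" using cyclic_on_inI[OF cc] by auto
  then have "\<sigma> ` c = c" using inj fc by (simp add: card_image card_subset_eq)
  then have "bij_betw \<sigma> c c" using inj by (simp add: bij_betw_def)
  then have "bij_betw (perm_restrict \<sigma> c) c c"
    by (rule bij_betw_cong[THEN iffD1, rotated]) (simp add: perm_restrict_def)
  then have "perm_restrict \<sigma> c permutes c"
    by (rule bij_imp_permutes) (simp add: perm_restrict_def)
  then show "perm_restrict \<sigma> c \<in> CP c"
    using cc by (simp add: CP_def cyclic_on_perm_restrict)
  note p1 = this
  show p2: "perm_restrict \<sigma> (S - c) permutes (S - c)"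
    by (rule perm_restrict_diff_cyclic[OF s cc])
  have "perm_restrict \<sigma> c \<circ> perm_restrict \<sigma> (S - c) = perm_restrict \<sigma> (c \<union> (S - c))"
    by (rule perm_restrict_union) (use p1 p2 in \<open>auto simp: CP_def\<close>)
  also have "c \<union> (S - c) = S" using cS by auto
  finally show "perm_restrict \<sigma> c \<circ> perm_restrict \<sigma> (S - c) = \<sigma>" using s by (simp add: comp_def)
qed

abbreviation "Perms S \<equiv> {p. p permutes S}"

lemma finite_CP: "finite c \<Longrightarrow> finite (CP c)"
  by (rule finite_subset[OF _ finite_permutations[of c]]) (auto simp: CP_def)

lemma finite_cyc: "finite S \<Longrightarrow> finite (cyc S \<sigma>)"
  by (simp add: cyc_def)

lemma extract_cyc:
  assumes S: "finite S"
  shows "(\<Sum>\<sigma>\<in>Perms S. \<Sum>c\<in>cyc S \<sigma>. G c \<sigma>) =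
    (\<Sum>c\<in>{c. c \<subseteq> S \<and> c \<noteq> {}}. \<Sum>\<rho>\<in>CP c. \<Sum>\<tau>\<in>Perms (S - c). G c (\<rho> \<circ> \<tau>))"
proof -
  let ?A = "SIGMA \<sigma>:Perms S. cyc S \<sigma>"
  let ?B = "SIGMA c:{c. c \<subseteq> S \<and> c \<noteq> {}}. CP c \<times> Perms (S - c)"
  have L: "(\<Sum>\<sigma>\<in>Perms S. \<Sum>c\<in>cyc S \<sigma>. G c \<sigma>) = (\<Sum>(\<sigma>, c)\<in>?A. G c \<sigma>)"
    by (rule sum.Sigma) (auto simp: S finite_permutations finite_cyc)
  have R: "(\<Sum>c\<in>{c. c \<subseteq> S \<and> c \<noteq> {}}. \<Sum>\<rho>\<in>CP c. \<Sum>\<tau>\<in>Perms (S - c). G c (\<rho> \<circ> \<tau>))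
     = (\<Sum>(c, p)\<in>?B. G c (fst p \<circ> snd p))"
  proof -
    have "(\<Sum>c\<in>{c. c \<subseteq> S \<and> c \<noteq> {}}. \<Sum>\<rho>\<in>CP c. \<Sum>\<tau>\<in>Perms (S - c). G c (\<rho> \<circ> \<tau>))
      = (\<Sum>c\<in>{c. c \<subseteq> S \<and> c \<noteq> {}}. \<Sum>p\<in>CP c \<times> Perms (S - c). G c (fst p \<circ> snd p))"
    proof (rule sum.cong[OF refl])
      fix c assume "c \<in> {c. c \<subseteq> S \<and> c \<noteq> {}}"
      then have "finite c" using S finite_subset by auto
      then show "(\<Sum>\<rho>\<in>CP c. \<Sum>\<tau>\<in>Perms (S - c). G c (\<rho> \<circ> \<tau>)) =
          (\<Sum>p\<in>CP c \<times> Perms (S - c). G c (fst p \<circ> snd p))"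
        by (subst sum.cartesian_product) (simp add: case_prod_unfold)
    qed
    also have "\<dots> = (\<Sum>(c, p)\<in>?B. G c (fst p \<circ> snd p))"
    proof (rule sum.Sigma)
      show "finite {c. c \<subseteq> S \<and> c \<noteq> {}}" using S by simp
      show "\<forall>c\<in>{c. c \<subseteq> S \<and> c \<noteq> {}}. finite (CP c \<times> Perms (S - c))"
      proof
        fix c assume "c \<in> {c. c \<subseteq> S \<and> c \<noteq> {}}"
        then have "finite c" using S finite_subset by auto
        then show "finite (CP c \<times> Perms (S - c))" using S by (simp add: finite_CP finite_permutations)
      qed
    qed
    finally show ?thesis .
  qed
  define h where "h = (\<lambda>(c::'a set, p::('a\<Rightarrow>'a)\<times>('a\<Rightarrow>'a)). (fst p \<circ> snd p, c))"
  define g where "g = (\<lambda>(\<sigma>::'a\<Rightarrow>'a, c::'a set). (c, (perm_restrict \<sigma> c, perm_restrict \<sigma> (S - c))))"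
  have bij: "bij_betw h ?B ?A"
  proof (rule bij_betwI[where g=g])
    show "h \<in> ?B \<rightarrow> ?A"
    proof
      fix x assume "x \<in> ?B"
      then obtain c \<rho> \<tau> where x: "x = (c, (\<rho>, \<tau>))" "c \<subseteq> S" "c \<noteq> {}" "\<rho> \<in> CP c" "\<tau> permutes (S - c)"
        by auto
      show "h x \<in> ?A" using glue_facts(1,2)[OF S x(2,3,4,5)] x(1) by (auto simp: h_def)
    qed
    show "g \<in> ?A \<rightarrow> ?B"
    proof
      fix y assume "y \<in> ?A"
      then obtain \<sigma> c where y: "y = (\<sigma>, c)" "\<sigma> permutes S" "c \<in> cyc S \<sigma>" by auto
      show "g y \<in> ?B" using split_facts[OF S y(2,3)] y(1) by (auto simp: g_def)
    qed
    show "g (h x) = x" if "x \<in> ?B" for x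
    proof -
      from that obtain c \<rho> \<tau> where x: "x = (c, (\<rho>, \<tau>))" "c \<subseteq> S" "c \<noteq> {}" "\<rho> \<in> CP c" "\<tau> permutes (S - c)"
        by auto
      show ?thesis using glue_facts(4,5)[OF S x(2,3,4,5)] x(1) by (simp add: h_def g_def)
    qed
    show "h (g y) = y" if "y \<in> ?A" for y
    proof -
      from that obtain \<sigma> c where y: "y = (\<sigma>, c)" "\<sigma> permutes S" "c \<in> cyc S \<sigma>" by auto
      show ?thesis using split_facts(5)[OF S y(2,3)] y(1) by (simp add: h_def g_def)
    qed
  qed
  have "(\<Sum>(\<sigma>, c)\<in>?A. G c \<sigma>) = (\<Sum>x\<in>?B. (\<lambda>(\<sigma>, c). G c \<sigma>) (h x))"
    by (rule sum.reindex_bij_betw[OF bij, symmetric])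
  also have "\<dots> = (\<Sum>(c, p)\<in>?B. G c (fst p \<circ> snd p))"
    by (rule sum.cong) (auto simp: h_def)
  finally show ?thesis using L R by simp
qed

lemma sum_pow_card:
  fixes F :: "nat \<Rightarrow> 'b::comm_semiring_1"
  assumes S: "finite S"
  shows "(\<Sum>c\<in>Pow S. F (card c)) = (\<Sum>j\<le>card S. of_nat (card S choose j) * F j)"
proof -
  have "(\<Sum>c\<in>Pow S. F (card c)) = (\<Sum>j\<in>{..card S}. \<Sum>c\<in>{c \<in> Pow S. card c = j}. F (card c))"
    by (rule sum.group[symmetric]) (use S in \<open>auto intro: card_mono\<close>)
  also have "\<dots> = (\<Sum>j\<le>card S. of_nat (card S choose j) * F j)"
  proof (rule sum.cong[OF refl])
    fix j
    have "(\<Sum>c\<in>{c \<in> Pow S. card c = j}. F (card c)) = (\<Sum>c\<in>{c \<in> Pow S. card c = j}. F j)"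
      by (rule sum.cong) auto
    also have "\<dots> = of_nat (card {c \<in> Pow S. card c = j}) * F j" by simp
    also have "card {c \<in> Pow S. card c = j} = card S choose j"
    proof -
      have "{c \<in> Pow S. card c = j} = {B. B \<subseteq> S \<and> card B = j}" by auto
      then show ?thesis using n_subsets[OF S] by simp
    qed
    finally show "(\<Sum>c\<in>{c \<in> Pow S. card c = j}. F (card c)) = of_nat (card S choose j) * F j" .
  qed
  finally show ?thesis .
qed

lemma sum_nonempty_card:
  fixes F :: "nat \<Rightarrow> 'b::comm_ring_1"
  assumes S: "finite S"
  shows "(\<Sum>c\<in>{c. c \<subseteq> S \<and> c \<noteq> {}}. F (card c)) = (\<Sum>j=1..card S. of_nat (card S choose j) * F j)"
proof -
  have P: "Pow S = insert {} {c. c \<subseteq> S \<and> c \<noteq> {}}" by auto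
  have "F 0 + (\<Sum>c\<in>{c. c \<subseteq> S \<and> c \<noteq> {}}. F (card c)) = (\<Sum>c\<in>Pow S. F (card c))"
    unfolding P using S by (subst sum.insert) auto
  also have "\<dots> = (\<Sum>j\<le>card S. of_nat (card S choose j) * F j)" by (rule sum_pow_card[OF S])
  also have "\<dots> = F 0 + (\<Sum>j=1..card S. of_nat (card S choose j) * F j)"
  proof -
    have "{..card S} = insert 0 {1..card S}" by auto
    then show ?thesis by simp
  qed
  finally show ?thesis by simp
qed

lemma sum_contains_card:
  fixes F :: "nat \<Rightarrow> 'b::comm_semiring_1"
  assumes S: "finite S" and x: "x \<in> S"
  shows "(\<Sum>c\<in>{c. c \<subseteq> S \<and> x \<in> c}. F (card c)) = (\<Sum>j\<le>card S - 1. of_nat ((card S - 1) choose j) * F (Suc j))"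
proof -
  have bij: "bij_betw (insert x) (Pow (S - {x})) {c. c \<subseteq> S \<and> x \<in> c}"
  proof (rule bij_betwI[where g="\<lambda>c. c - {x}"])
    show "insert x \<in> Pow (S - {x}) \<rightarrow> {c. c \<subseteq> S \<and> x \<in> c}" using x by auto
    show "(\<lambda>c. c - {x}) \<in> {c. c \<subseteq> S \<and> x \<in> c} \<rightarrow> Pow (S - {x})" by auto
  qed auto
  have "(\<Sum>c\<in>{c. c \<subseteq> S \<and> x \<in> c}. F (card c)) = (\<Sum>B\<in>Pow (S - {x}). F (card (insert x B)))"
    by (rule sum.reindex_bij_betw[OF bij, symmetric])
  also have "\<dots> = (\<Sum>B\<in>Pow (S - {x}). F (Suc (card B)))"
  proof (rule sum.cong[OF refl])
    fix B assume "B \<in> Pow (S - {x})"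
    then have "finite B" "x \<notin> B" using S finite_subset by auto
    then show "F (card (insert x B)) = F (Suc (card B))" by simp
  qed
  also have "\<dots> = (\<Sum>j\<le>card (S - {x}). of_nat (card (S - {x}) choose j) * F (Suc j))"
    by (rule sum_pow_card[where F="\<lambda>j. F (Suc j)"]) (use S in auto)
  also have "card (S - {x}) = card S - 1" using S x by simp
  finally show ?thesis .
qed

lemma cyc_contains:
  assumes S: "finite S" and s: "\<sigma> permutes S" and x: "x \<in> S"
  shows "{c \<in> cyc S \<sigma>. x \<in> c} = {orbit \<sigma> x}"
proof -
  have perm: "permutation \<sigma>" using s S by (auto simp: permutation_permutes)
  have "c = orbit \<sigma> x" if c1: "c \<in> cyc S \<sigma>" and c2: "x \<in> c" for c
  proof -
    obtain y where "c = orbit \<sigma> y" using c1 by (auto simp: cyc_def)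
    then have "cyclic_on \<sigma> c" using cyclic_on_orbit'[OF perm] by simp
    then show ?thesis using orbit_cyclic_eq3 c2 by metis
  qed
  moreover have "orbit \<sigma> x \<in> cyc S \<sigma>" using x by (auto simp: cyc_def)
  moreover have "x \<in> orbit \<sigma> x" using permutation_self_in_orbit[OF perm] .
  ultimately show ?thesis by blast
qed

lemma count_contains:
  assumes S: "finite S" and s: "\<sigma> permutes S" and x: "x \<in> S"
  shows "(\<Sum>c\<in>cyc S \<sigma>. (if x \<in> c then G c else 0)) = (G (orbit \<sigma> x) :: 'b::comm_monoid_add)"
proof -
  have "(\<Sum>c\<in>cyc S \<sigma>. (if x \<in> c then G c else 0)) = (\<Sum>c\<in>{c \<in> cyc S \<sigma>. x \<in> c}. G c)"
    by (simp add: sum.inter_filter[symmetric] finite_cyc S)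
  also have "\<dots> = G (orbit \<sigma> x)" using cyc_contains[OF S s x] by simp
  finally show ?thesis .
qed

lemma card_CP_aux:
  "\<forall>c. finite c \<and> card c = n \<and> n \<ge> 1 \<longrightarrow> card (CP c) = fact (n - 1)"
proof (induction n rule: less_induct)
  case (less n)
  show ?case
  proof (intro allI impI)
    fix c :: "'a set" assume c: "finite c \<and> card c = n \<and> n \<ge> 1"
    then have fc: "finite c" and cn: "card c = n" and n1: "n \<ge> 1" by auto
    then obtain x where x: "x \<in> c" by fastforce
    have "(\<Sum>\<sigma>\<in>Perms c. \<Sum>c'\<in>cyc c \<sigma>. (if x \<in> c' then 1 else 0)) =
      (\<Sum>c'\<in>{c'. c' \<subseteq> c \<and> c' \<noteq> {}}. \<Sum>\<rho>\<in>CP c'. \<Sum>\<tau>\<in>Perms (c - c'). (if x \<in> c' then 1 else 0::nat))"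
      by (rule extract_cyc[OF fc])
    moreover have "(\<Sum>\<sigma>\<in>Perms c. \<Sum>c'\<in>cyc c \<sigma>. (if x \<in> c' then 1 else 0::nat)) = fact n"
    proof -
      have "(\<Sum>\<sigma>\<in>Perms c. \<Sum>c'\<in>cyc c \<sigma>. (if x \<in> c' then 1 else 0::nat)) = (\<Sum>\<sigma>\<in>Perms c. 1)"
      proof (rule sum.cong[OF refl])
        fix \<sigma> assume "\<sigma> \<in> Perms c"
        then show "(\<Sum>c'\<in>cyc c \<sigma>. (if x \<in> c' then 1 else 0::nat)) = 1"
          using count_contains[OF fc _ x, of \<sigma> "\<lambda>_. 1::nat"] by simp
      qed
      also have "\<dots> = fact n" using card_permutations[OF cn fc] by simp
      finally show ?thesis .
    qed
    moreover have "(\<Sum>c'\<in>{c'. c' \<subseteq> c \<and> c' \<noteq> {}}. \<Sum>\<rho>\<in>CP c'. \<Sum>\<tau>\<in>Perms (c - c'). (if x \<in> c' then 1 else 0::nat))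
       = (\<Sum>c'\<in>{c'. c' \<subseteq> c \<and> x \<in> c'}. card (CP c') * fact (n - card c'))"
    proof -
      have "(\<Sum>c'\<in>{c'. c' \<subseteq> c \<and> c' \<noteq> {}}. \<Sum>\<rho>\<in>CP c'. \<Sum>\<tau>\<in>Perms (c - c'). (if x \<in> c' then 1 else 0::nat))
        = (\<Sum>c'\<in>{c'. c' \<subseteq> c \<and> c' \<noteq> {}}. (if x \<in> c' then card (CP c') * fact (n - card c') else 0))"
      proof (rule sum.cong[OF refl])
        fix c' assume "c' \<in> {c'. c' \<subseteq> c \<and> c' \<noteq> {}}"
        then have "finite c'" "c' \<subseteq> c" using fc finite_subset by auto
        then have "card (Perms (c - c')) = fact (n - card c')"
          using card_permutations[of "c - c'"] fc cn by (simp add: card_Diff_subset)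
        then show "(\<Sum>\<rho>\<in>CP c'. \<Sum>\<tau>\<in>Perms (c - c'). (if x \<in> c' then 1 else 0::nat)) =
          (if x \<in> c' then card (CP c') * fact (n - card c') else 0)" by simp
      qed
      also have "\<dots> = (\<Sum>c'\<in>{c'\<in>{c'. c' \<subseteq> c \<and> c' \<noteq> {}}. x \<in> c'}. card (CP c') * fact (n - card c'))"
        by (rule sum.inter_filter[symmetric]) (use fc in simp)
      also have "{c'\<in>{c'. c' \<subseteq> c \<and> c' \<noteq> {}}. x \<in> c'} = {c'. c' \<subseteq> c \<and> x \<in> c'}" by auto
      finally show ?thesis .
    qed
    moreover define F where "F j = (if j = n then card (CP c) else fact (j - 1) * fact (n - j))" for j
    have "(\<Sum>c'\<in>{c'. c' \<subseteq> c \<and> x \<in> c'}. card (CP c') * fact (n - card c')) = (\<Sum>c'\<in>{c'. c' \<subseteq> c \<and> x \<in> c'}. F (card c'))"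
    proof (rule sum.cong[OF refl])
      fix c' assume c': "c' \<in> {c'. c' \<subseteq> c \<and> x \<in> c'}"
      then have fc': "finite c'" "c' \<subseteq> c" "x \<in> c'" using fc finite_subset by auto
      show "card (CP c') * fact (n - card c') = F (card c')"
      proof (cases "c' = c")
        case True then show ?thesis by (simp add: F_def cn)
      next
        case False
        then have "c' \<subset> c" using fc'(2) by auto
        then have lt: "card c' < n" using psubset_card_mono[OF fc] cn by simp
        have "card c' \<noteq> 0" using fc' by auto
        then have "card c' \<ge> 1" by simp
        then have "card (CP c') = fact (card c' - 1)" using less.IH[OF lt] fc' by blast
        then show ?thesis using lt by (simp add: F_def)
      qed
    qed
    moreover have "(\<Sum>c'\<in>{c'. c' \<subseteq> c \<and> x \<in> c'}. F (card c')) = (\<Sum>j\<le>n - 1. ((n - 1) choose j) * F (Suc j))"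
      using sum_contains_card[OF fc x, of F] cn by simp
    moreover have "(\<Sum>j\<le>n - 1. ((n - 1) choose j) * F (Suc j)) = (n - 1) * fact (n - 1) + card (CP c)"
    proof -
      have "{..n - 1} = insert (n - 1) {..<n - 1}" by auto
      then have "(\<Sum>j\<le>n - 1. ((n - 1) choose j) * F (Suc j)) = F n + (\<Sum>j<n - 1. ((n - 1) choose j) * F (Suc j))"
        using n1 by simp
      also have "(\<Sum>j<n - 1. ((n - 1) choose j) * F (Suc j)) = (\<Sum>j<n - 1. fact (n - 1))"
      proof (rule sum.cong[OF refl])
        fix j assume "j \<in> {..<n - 1}"
        then have j: "j < n - 1" by simp
        then have "F (Suc j) = fact j * fact (n - 1 - j)" by (simp add: F_def)
        then show "((n - 1) choose j) * F (Suc j) = fact (n - 1)"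
          using binomial_fact_lemma[of j "n - 1"] j by (simp add: algebra_simps)
      qed
      finally show ?thesis by (simp add: F_def)
    qed
    ultimately have e: "fact n = (n - 1) * fact (n - 1) + card (CP c)" by simp
    obtain m where m: "n = Suc m" using n1 by (cases n) auto
    show "card (CP c) = fact (n - 1)" using e unfolding m by simp
  qed
qed

lemma card_CP: "finite c \<Longrightarrow> c \<noteq> {} \<Longrightarrow> card (CP c) = fact (card c - 1)"
proof -
  assume a: "finite c" "c \<noteq> {}"
  then have "card c \<ge> 1" by (simp add: Suc_leI card_gt_0_iff)
  then show ?thesis using card_CP_aux[of "card c"] a by blast
qed

lemma poch_identity:
  fixes \<theta> :: real
  shows "\<theta> * (\<Sum>i\<le>m. pochhammer \<theta> i / fact i) * fact m = pochhammer \<theta> (Suc m)"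
proof (induction m)
  case 0 then show ?case by simp
next
  case (Suc m)
  define A where "A = (\<Sum>i\<le>m. pochhammer \<theta> i / fact i)"
  define p where "p = pochhammer \<theta> (Suc m)"
  define f where "f = (fact m :: real)"
  have fpos: "f > 0" by (simp add: f_def)
  have fs: "(fact (Suc m) :: real) = real (Suc m) * f" unfolding f_def by (rule fact_Suc)
  have s: "(\<Sum>i\<le>Suc m. pochhammer \<theta> i / fact i) = A + p / fact (Suc m)"
    unfolding A_def p_def by (rule sum.atMost_Suc)
  have alg: "\<theta> * (A + p / (real (Suc m) * f)) * (real (Suc m) * f) = real (Suc m) * (\<theta> * A * f) + \<theta> * p"
    using fpos by (simp add: field_simps del: of_nat_Suc)
  have "\<theta> * (\<Sum>i\<le>Suc m. pochhammer \<theta> i / fact i) * fact (Suc m)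
     = real (Suc m) * (\<theta> * A * f) + \<theta> * p"
    unfolding s fs by (rule alg)
  also have "\<theta> * A * f = p" using Suc by (simp add: A_def p_def f_def)
  also have "real (Suc m) * p + \<theta> * p = pochhammer \<theta> (Suc (Suc m))"
    by (simp add: p_def pochhammer_Suc[of \<theta> "Suc m"] algebra_simps)
  finally show ?case .
qed
lemma poch_identity2:
  fixes \<theta> :: real
  shows "\<theta> * (\<Sum>j\<le>m. real (m choose j) * (fact j * pochhammer \<theta> (m - j))) = pochhammer \<theta> (Suc m)"
proof -
  have "(\<Sum>j\<le>m. real (m choose j) * (fact j * pochhammer \<theta> (m - j)))
      = (\<Sum>j\<le>m. fact m * (pochhammer \<theta> (m - j) / fact (m - j)))"
  proof (rule sum.cong[OF refl])
    fix j assume "j \<in> {..m}"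
    then have j: "j \<le> m" by simp
    have "real (fact j * fact (m - j) * (m choose j)) = real (fact m)"
      using binomial_fact_lemma[OF j] by (simp only:)
    then have e: "real (m choose j) * fact j * fact (m - j) = fact m"
      by (simp only: of_nat_mult of_nat_fact mult_ac)
    have "(fact (m - j) :: real) \<noteq> 0" by simp
    then show "real (m choose j) * (fact j * pochhammer \<theta> (m - j)) = fact m * (pochhammer \<theta> (m - j) / fact (m - j))"
      unfolding e[symmetric] by (simp add: field_simps)
  qed
  also have "\<dots> = fact m * (\<Sum>j\<le>m. pochhammer \<theta> (m - j) / fact (m - j))"
    by (simp add: sum_distrib_left)
  also have "(\<Sum>j\<le>m. pochhammer \<theta> (m - j) / fact (m - j)) = (\<Sum>i\<le>m. pochhammer \<theta> i / fact i)"
    using sum.atLeastAtMost_rev[of "\<lambda>i. pochhammer \<theta> i / fact i" 0 m] by (simp add: atLeast0AtMost)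
  finally show ?thesis using poch_identity[of \<theta> m] by (simp add: algebra_simps)
qed
lemma real_card_CP: "finite c \<Longrightarrow> c \<noteq> {} \<Longrightarrow> real (card (CP c)) = fact (card c - 1)"
  by (simp add: card_CP)

lemma card_perms_Diff:
  assumes "finite S" "c \<subseteq> S"
  shows "card (Perms (S - c)) = fact (card S - card c)"
  using card_permutations[of "S - c"] assms by (simp add: card_Diff_subset finite_subset)

lemma perms_empty: "Perms {} = {id}"
  by (auto simp: permutes_empty)

lemma cyc_empty: "cyc {} \<sigma> = {}"
  by (simp add: cyc_def)

lemma S0_aux:
  fixes \<theta> :: real
  shows "\<forall>S. finite S \<and> card S = n \<longrightarrow> (\<Sum>\<tau>\<in>Perms S. \<theta> ^ card (cyc S \<tau>)) = pochhammer \<theta> n"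
proof (induction n rule: less_induct)
  case (less n)
  show ?case
  proof (intro allI impI)
    fix S :: "'a set" assume S: "finite S \<and> card S = n"
    then have fS: "finite S" and cS: "card S = n" by auto
    show "(\<Sum>\<tau>\<in>Perms S. \<theta> ^ card (cyc S \<tau>)) = pochhammer \<theta> n"
    proof (cases "S = {}")
      case True then show ?thesis using cS by (simp add: perms_empty cyc_empty)
    next
      case False
      then obtain x where x: "x \<in> S" by auto
      have n1: "n \<ge> 1" using False fS cS using card_gt_0_iff[of S] by simp
      have "(\<Sum>\<tau>\<in>Perms S. \<theta> ^ card (cyc S \<tau>)) = (\<Sum>\<tau>\<in>Perms S. \<Sum>c\<in>cyc S \<tau>. (if x \<in> c then \<theta> ^ card (cyc S \<tau>) else 0))"
      proof (rule sum.cong[OF refl])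
        fix \<tau> assume "\<tau> \<in> Perms S"
        then show "\<theta> ^ card (cyc S \<tau>) = (\<Sum>c\<in>cyc S \<tau>. (if x \<in> c then \<theta> ^ card (cyc S \<tau>) else 0))"
          using count_contains[OF fS _ x, of \<tau> "\<lambda>_. \<theta> ^ card (cyc S \<tau>)"] by simp
      qed
      also have "\<dots> = (\<Sum>c\<in>{c. c \<subseteq> S \<and> c \<noteq> {}}. \<Sum>\<rho>\<in>CP c. \<Sum>\<tau>\<in>Perms (S - c).
            (if x \<in> c then \<theta> ^ card (cyc S (\<rho> \<circ> \<tau>)) else 0))"
        by (rule extract_cyc[OF fS])
      also have "\<dots> = (\<Sum>c\<in>{c. c \<subseteq> S \<and> c \<noteq> {}}. (if x \<in> c then \<theta> * fact (card c - 1) * pochhammer \<theta> (n - card c) else 0))"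
      proof (rule sum.cong[OF refl])
        fix c assume c: "c \<in> {c. c \<subseteq> S \<and> c \<noteq> {}}"
        then have cS': "c \<subseteq> S" "c \<noteq> {}" by auto
        have fc: "finite c" using cS' fS finite_subset by auto
        have c0: "card c > 0" using fc cS'(2) by (simp add: card_gt_0_iff)
        have "card c \<le> n" using card_mono[OF fS cS'(1)] cS by simp
        then have lt: "card (S - c) < n" using c0 card_Diff_subset[OF fc cS'(1)] cS by simp
        have IH: "(\<Sum>\<tau>\<in>Perms (S - c). \<theta> ^ card (cyc (S - c) \<tau>)) = pochhammer \<theta> (n - card c)"
          using less.IH[OF lt] fS cS cS' fc by (simp add: card_Diff_subset)
        have "(\<Sum>\<rho>\<in>CP c. \<Sum>\<tau>\<in>Perms (S - c). \<theta> ^ card (cyc S (\<rho> \<circ> \<tau>)))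
            = (\<Sum>\<rho>\<in>CP c. \<Sum>\<tau>\<in>Perms (S - c). \<theta> * \<theta> ^ card (cyc (S - c) \<tau>))"
        proof (intro sum.cong[OF refl])
          fix \<rho> \<tau> assume "\<rho> \<in> CP c" "\<tau> \<in> Perms (S - c)"
          then have "cyc S (\<rho> \<circ> \<tau>) = insert c (cyc (S - c) \<tau>)" "c \<notin> cyc (S - c) \<tau>"
            using glue_facts(2,3)[OF fS cS'] by auto
          moreover have "finite (cyc (S - c) \<tau>)" using fS by (simp add: finite_cyc)
          ultimately show "\<theta> ^ card (cyc S (\<rho> \<circ> \<tau>)) = \<theta> * \<theta> ^ card (cyc (S - c) \<tau>)" by simp
        qed
        also have "\<dots> = real (card (CP c)) * (\<theta> * pochhammer \<theta> (n - card c))"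
          by (simp add: sum_distrib_left[symmetric] IH)
        finally show "(\<Sum>\<rho>\<in>CP c. \<Sum>\<tau>\<in>Perms (S - c). (if x \<in> c then \<theta> ^ card (cyc S (\<rho> \<circ> \<tau>)) else 0)) =
            (if x \<in> c then \<theta> * fact (card c - 1) * pochhammer \<theta> (n - card c) else 0)"
          using real_card_CP[OF fc cS'(2)] by simp
      qed
      also have "\<dots> = (\<Sum>c\<in>{c'\<in>{c. c \<subseteq> S \<and> c \<noteq> {}}. x \<in> c'}. \<theta> * fact (card c - 1) * pochhammer \<theta> (n - card c))"
        by (rule sum.inter_filter[symmetric]) (use fS in simp)
      also have "{c'\<in>{c. c \<subseteq> S \<and> c \<noteq> {}}. x \<in> c'} = {c. c \<subseteq> S \<and> x \<in> c}" by auto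
      also have "(\<Sum>c\<in>{c. c \<subseteq> S \<and> x \<in> c}. \<theta> * fact (card c - 1) * pochhammer \<theta> (n - card c))
          = (\<Sum>j\<le>n - 1. real ((n - 1) choose j) * (\<theta> * fact j * pochhammer \<theta> (n - Suc j)))"
        using sum_contains_card[OF fS x, of "\<lambda>j. \<theta> * fact (j - 1) * pochhammer \<theta> (n - j)"] cS by simp
      also have "\<dots> = \<theta> * (\<Sum>j\<le>n - 1. real ((n - 1) choose j) * (fact j * pochhammer \<theta> (n - 1 - j)))"
        by (simp add: sum_distrib_left algebra_simps)
      also have "\<dots> = pochhammer \<theta> n" using poch_identity2[of \<theta> "n - 1"] n1 by simp
      finally show ?thesis .
    qed
  qed
qed

lemma S0:
  fixes \<theta> :: real
  shows "finite S \<Longrightarrow> (\<Sum>\<tau>\<in>Perms S. \<theta> ^ card (cyc S \<tau>)) = pochhammer \<theta> (card S)"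
  using S0_aux by blast

lemma falling_gchoose: "falling x r = fact r * (x gchoose r)"
  by (simp add: falling_def gbinomial_prod_rev atLeast0LessThan)

lemma falling_vandermonde:
  "falling (x + y) m = (\<Sum>i\<le>m. real (m choose i) * falling x i * falling y (m - i))"
proof -
  have "falling (x + y) m = fact m * (\<Sum>i\<le>m. (x gchoose i) * (y gchoose (m - i)))"
    using gbinomial_Vandermonde[of x y m] by (simp add: falling_gchoose atLeast0AtMost)
  also have "\<dots> = (\<Sum>i\<le>m. fact m * ((x gchoose i) * (y gchoose (m - i))))"
    by (simp add: sum_distrib_left)
  also have "\<dots> = (\<Sum>i\<le>m. real (m choose i) * falling x i * falling y (m - i))"
  proof (rule sum.cong[OF refl])
    fix i assume "i \<in> {..m}"
    then have j: "i \<le> m" by simp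
    have "real (fact i * fact (m - i) * (m choose i)) = real (fact m)"
      using binomial_fact_lemma[OF j] by (simp only:)
    then have e: "real (m choose i) * fact i * fact (m - i) = fact m"
      by (simp only: of_nat_mult of_nat_fact mult_ac)
    show "fact m * ((x gchoose i) * (y gchoose (m - i))) = real (m choose i) * falling x i * falling y (m - i)"
      unfolding falling_gchoose e[symmetric] by (simp add: algebra_simps)
  qed
  finally show ?thesis .
qed

lemma falling_Suc_left: "falling x (Suc i) = x * falling (x - 1) i"
  unfolding falling_def prod.lessThan_Suc_shift by (simp add: algebra_simps)

lemma falling_Suc: "falling x (Suc k) = falling x k * (x - real k)"
  unfolding falling_def by simp

lemma falling_0[simp]: "falling x 0 = 1"
  unfolding falling_def by simp

lemma vand1:
  "(\<Sum>r=1..Suc m. real (m choose (r - 1)) * falling x r * falling y (Suc m - r)) = x * falling (x + y - 1) m"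
proof -
  have "(\<Sum>r=1..Suc m. real (m choose (r - 1)) * falling x r * falling y (Suc m - r))
      = (\<Sum>i=0..m. real (m choose i) * falling x (Suc i) * falling y (m - i))"
    using sum.shift_bounds_cl_Suc_ivl[of "\<lambda>r. real (m choose (r - 1)) * falling x r * falling y (Suc m - r)" 0 m]
    by simp
  also have "\<dots> = x * (\<Sum>i\<le>m. real (m choose i) * falling (x - 1) i * falling y (m - i))"
    by (simp add: falling_Suc_left sum_distrib_left atLeast0AtMost algebra_simps)
  also have "\<dots> = x * falling (x - 1 + y) m" by (simp add: falling_vandermonde)
  finally show ?thesis by (simp add: algebra_simps)
qed

lemma falling_rec:
  assumes C: "finite C" and k: "k \<ge> 1"
  shows "falling (\<Sum>c\<in>C. x c) k = (\<Sum>r=1..k. real ((k - 1) choose (r - 1)) *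
     (\<Sum>c\<in>C. falling (x c) r * falling (\<Sum>c'\<in>C - {c}. x c') (k - r)))"
proof -
  obtain m where m: "k = Suc m" using k by (cases k) auto
  define X where "X = (\<Sum>c\<in>C. x c)"
  have "(\<Sum>r=1..k. real ((k - 1) choose (r - 1)) * (\<Sum>c\<in>C. falling (x c) r * falling (\<Sum>c'\<in>C - {c}. x c') (k - r)))
     = (\<Sum>c\<in>C. \<Sum>r=1..k. real ((k - 1) choose (r - 1)) * falling (x c) r * falling (\<Sum>c'\<in>C - {c}. x c') (k - r))"
    by (subst sum.swap) (simp add: sum_distrib_left algebra_simps)
  also have "\<dots> = (\<Sum>c\<in>C. x c * falling (X - 1) m)"
  proof (rule sum.cong[OF refl])
    fix c assume c: "c \<in> C"
    have "(\<Sum>c'\<in>C - {c}. x c') = X - x c" using C c by (simp add: sum_diff1 X_def)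
    then show "(\<Sum>r=1..k. real ((k - 1) choose (r - 1)) * falling (x c) r * falling (\<Sum>c'\<in>C - {c}. x c') (k - r))
      = x c * falling (X - 1) m"
      using vand1[of m "x c" "X - x c"] unfolding m by simp
  qed
  also have "\<dots> = X * falling (X - 1) m" by (simp add: X_def sum_distrib_right)
  also have "\<dots> = falling X k" by (simp add: m falling_Suc_left)
  finally show ?thesis by (simp add: X_def)
qed

definition cons1 :: "'b \<Rightarrow> (nat \<Rightarrow> 'b) \<Rightarrow> nat \<Rightarrow> 'b" where
  "cons1 x f = (\<lambda>i. if i = 0 then undefined else if i = 1 then x else f (i - 1))"

definition tl1 :: "(nat \<Rightarrow> 'b) \<Rightarrow> nat \<Rightarrow> nat \<Rightarrow> 'b" where
  "tl1 g u = (\<lambda>i. if i \<in> {1..u} then g (Suc i) else undefined)"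

lemma cons1_1[simp]: "cons1 x f (Suc 0) = x" by (simp add: cons1_def)
lemma cons1_Suc[simp]: "i \<ge> 1 \<Longrightarrow> cons1 x f (Suc i) = f i" by (simp add: cons1_def)

lemma cons1_bij:
  "bij_betw (\<lambda>(x, f). cons1 x f) (A \<times> ({1..u} \<rightarrow>\<^sub>E A)) ({1..Suc u} \<rightarrow>\<^sub>E A)"
proof (rule bij_betwI[where g="\<lambda>g. (g 1, tl1 g u)"])
  show "(\<lambda>(x, f). cons1 x f) \<in> A \<times> ({1..u} \<rightarrow>\<^sub>E A) \<rightarrow> {1..Suc u} \<rightarrow>\<^sub>E A"
  proof (clarify)
    fix x f assume x: "x \<in> A" and f: "f \<in> {1..u} \<rightarrow>\<^sub>E A"
    show "cons1 x f \<in> {1..Suc u} \<rightarrow>\<^sub>E A"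
    proof (rule PiE_I)
      fix i assume i: "i \<in> {1..Suc u}"
      show "cons1 x f i \<in> A"
      proof (cases "i = 1")
        case True then show ?thesis using x by (simp add: cons1_def)
      next
        case False
        have i0: "i \<noteq> 0" using i by auto
        have "i - 1 \<in> {1..u}" using i False by auto
        then have "f (i - 1) \<in> A" by (rule PiE_mem[OF f])
        moreover have "cons1 x f i = f (i - 1)" using i0 False by (simp add: cons1_def)
        ultimately show ?thesis by simp
      qed
    next
      fix i assume i: "i \<notin> {1..Suc u}"
      show "cons1 x f i = undefined"
      proof (cases "i = 0")
        case True then show ?thesis by (simp add: cons1_def)
      next
        case False
        have i1: "i - 1 \<notin> {1..u}" "i \<noteq> 1" using i False by auto
        have "f (i - 1) = undefined" by (rule PiE_arb[OF f i1(1)])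
        moreover have "cons1 x f i = f (i - 1)" using i1(2) False by (simp add: cons1_def)
        ultimately show ?thesis by simp
      qed
    qed
  qed
  show "(\<lambda>g. (g 1, tl1 g u)) \<in> ({1..Suc u} \<rightarrow>\<^sub>E A) \<rightarrow> A \<times> ({1..u} \<rightarrow>\<^sub>E A)"
    by (auto simp: tl1_def PiE_def Pi_def extensional_def)
  show "(\<lambda>g. (g 1, tl1 g u)) ((\<lambda>(x, f). cons1 x f) xf) = xf" if "xf \<in> A \<times> ({1..u} \<rightarrow>\<^sub>E A)" for xf
    using that by (auto simp: tl1_def cons1_def PiE_def extensional_def fun_eq_iff)
  show "(\<lambda>(x, f). cons1 x f) ((\<lambda>g. (g 1, tl1 g u)) g) = g" if "g \<in> {1..Suc u} \<rightarrow>\<^sub>E A" for g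
  proof -
    have "cons1 (g 1) (tl1 g u) i = g i" for i
      using that by (cases i) (auto simp: tl1_def cons1_def PiE_def extensional_def)
    then show ?thesis by (auto simp: fun_eq_iff)
  qed
qed

lemma sum_cons1:
  fixes F :: "(nat \<Rightarrow> 'b) \<Rightarrow> 'c::comm_monoid_add"
  assumes A: "finite A"
  shows "(\<Sum>g\<in>{g \<in> {1..Suc u} \<rightarrow>\<^sub>E A. P g}. F g) = (\<Sum>x\<in>A. \<Sum>f\<in>{f \<in> {1..u} \<rightarrow>\<^sub>E A. P (cons1 x f)}. F (cons1 x f))"
proof -
  let ?h = "\<lambda>(x, f). cons1 x f"
  have bij: "bij_betw ?h (SIGMA x:A. {f \<in> {1..u} \<rightarrow>\<^sub>E A. P (cons1 x f)}) {g \<in> {1..Suc u} \<rightarrow>\<^sub>E A. P g}"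
  proof -
    have b: "bij_betw ?h (A \<times> ({1..u} \<rightarrow>\<^sub>E A)) ({1..Suc u} \<rightarrow>\<^sub>E A)" by (rule cons1_bij)
    have "bij_betw ?h {xf \<in> A \<times> ({1..u} \<rightarrow>\<^sub>E A). P (?h xf)} {g \<in> {1..Suc u} \<rightarrow>\<^sub>E A. P g}"
    proof -
      have "?h ` {xf \<in> A \<times> ({1..u} \<rightarrow>\<^sub>E A). P (?h xf)} = {g \<in> ?h ` (A \<times> ({1..u} \<rightarrow>\<^sub>E A)). P g}"
        by auto
      then show ?thesis using b unfolding bij_betw_def by (auto intro: inj_on_subset)
    qed
    moreover have "{xf \<in> A \<times> ({1..u} \<rightarrow>\<^sub>E A). P (?h xf)} = (SIGMA x:A. {f \<in> {1..u} \<rightarrow>\<^sub>E A. P (cons1 x f)})"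
      by auto
    ultimately show ?thesis by simp
  qed
  have "(\<Sum>g\<in>{g \<in> {1..Suc u} \<rightarrow>\<^sub>E A. P g}. F g) = (\<Sum>xf\<in>(SIGMA x:A. {f \<in> {1..u} \<rightarrow>\<^sub>E A. P (cons1 x f)}). F (?h xf))"
    by (rule sum.reindex_bij_betw[OF bij, symmetric])
  also have "\<dots> = (\<Sum>(x, f)\<in>(SIGMA x:A. {f \<in> {1..u} \<rightarrow>\<^sub>E A. P (cons1 x f)}). F (cons1 x f))"
    by (rule sum.cong) auto
  also have "\<dots> = (\<Sum>x\<in>A. \<Sum>f\<in>{f \<in> {1..u} \<rightarrow>\<^sub>E A. P (cons1 x f)}. F (cons1 x f))"
  proof (rule sum.Sigma[symmetric])
    show "finite A" by fact
    show "\<forall>x\<in>A. finite {f \<in> {1..u} \<rightarrow>\<^sub>E A. P (cons1 x f)}"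
    proof
      fix x assume "x \<in> A"
      have fin: "finite ({1..u} \<rightarrow>\<^sub>E A)" using A by (simp add: finite_PiE)
      show "finite {f \<in> {1..u} \<rightarrow>\<^sub>E A. P (cons1 x f)}"
        by (rule finite_subset[OF _ fin]) blast
    qed
  qed
  finally show ?thesis .
qed

lemma sum_shift1:
  fixes F :: "nat \<Rightarrow> 'c::comm_monoid_add"
  shows "(\<Sum>i=1..Suc u. F i) = F 1 + (\<Sum>i=1..u. F (Suc i))"
proof -
  have "(\<Sum>i=1..Suc u. F i) = F 1 + (\<Sum>i=Suc 1..Suc u. F i)"
    by (rule sum.atLeast_Suc_atMost) simp
  also have "(\<Sum>i=Suc 1..Suc u. F i) = (\<Sum>i=1..u. F (Suc i))"
    by (rule sum.shift_bounds_cl_Suc_ivl)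
  finally show ?thesis .
qed

lemma prod_shift1:
  fixes F :: "nat \<Rightarrow> 'c::comm_monoid_mult"
  shows "(\<Prod>i=1..Suc u. F i) = F 1 * (\<Prod>i=1..u. F (Suc i))"
proof -
  have "(\<Prod>i=1..Suc u. F i) = F 1 * (\<Prod>i=Suc 1..Suc u. F i)"
    by (rule prod.atLeast_Suc_atMost) simp
  also have "(\<Prod>i=Suc 1..Suc u. F i) = (\<Prod>i=1..u. F (Suc i))"
    by (rule prod.shift_bounds_cl_Suc_ivl)
  finally show ?thesis .
qed

lemma sum_cons1_val: "(\<Sum>i=1..Suc u. cons1 x f i) = x + (\<Sum>i=1..u. (f i :: nat))"
  unfolding sum_shift1[of "cons1 x f"] by (simp add: cons1_def)

lemma prod_cons1_val: "(\<Prod>i=1..Suc u. H (cons1 x f i) (cons1 y g i)) = H x y * (\<Prod>i=1..u. (H (f i) (g i) :: 'c::comm_monoid_mult))"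
  unfolding prod_shift1[of "\<lambda>i. H (cons1 x f i) (cons1 y g i)"] by (simp add: cons1_def)

lemma prefix_cons1: "i \<ge> 1 \<Longrightarrow> (\<Sum>l=1..<Suc i. cons1 x f l) = x + (\<Sum>l=1..<i. (f l :: nat))"
proof (induction i)
  case 0 then show ?case by simp
next
  case (Suc i)
  show ?case
  proof (cases "i = 0")
    case True then show ?thesis by simp
  next
    case False
    then have "(\<Sum>l=1..<Suc (Suc i). cons1 x f l) = (\<Sum>l=1..<Suc i. cons1 x f l) + cons1 x f (Suc i)" by simp
    also have "\<dots> = x + (\<Sum>l=1..<i. f l) + f i" using Suc False by simp
    also have "\<dots> = x + (\<Sum>l=1..<Suc i. f l)" using False by simp
    finally show ?thesis .
  qed
qed

definition Comp :: "nat \<Rightarrow> nat \<Rightarrow> (nat \<Rightarrow> nat) set" where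
  "Comp k u = {r \<in> {1..u} \<rightarrow>\<^sub>E {1..k}. (\<Sum>i=1..u. r i) = k}"

definition Js :: "nat \<Rightarrow> nat \<Rightarrow> (nat \<Rightarrow> nat) set" where
  "Js n u = {J \<in> {1..u} \<rightarrow>\<^sub>E {1..n}. (\<Sum>i=1..u. J i) \<le> n}"

definition Bc :: "nat \<Rightarrow> nat \<Rightarrow> (nat \<Rightarrow> nat) \<Rightarrow> real" where
  "Bc k u r = (\<Prod>i=1..u. real ((k - (\<Sum>l=1..<i. r l) - 1) choose (r i - 1)))"

definition Tm :: "(nat \<Rightarrow> real) \<Rightarrow> real \<Rightarrow> nat \<Rightarrow> nat \<Rightarrow> (nat \<Rightarrow> nat) \<Rightarrow> (nat \<Rightarrow> nat) \<Rightarrow> real" where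
  "Tm a \<theta> n u r J = (\<Prod>i=1..u. falling (a (J i)) (r i)) / (\<Prod>i=1..u. real (J i)) *
     (fact n / fact (n - (\<Sum>i=1..u. J i))) * pochhammer \<theta> (n - (\<Sum>i=1..u. J i))"

definition V :: "(nat \<Rightarrow> real) \<Rightarrow> real \<Rightarrow> nat \<Rightarrow> nat \<Rightarrow> nat \<Rightarrow> real" where
  "V a \<theta> n k u = (\<Sum>r\<in>Comp k u. Bc k u r * (\<Sum>J\<in>Js n u. Tm a \<theta> n u r J))"

lemma prod_cons1_val1: "(\<Prod>i=1..Suc u. H (cons1 y g i)) = H y * (\<Prod>i=1..u. (H (g i) :: 'c::comm_monoid_mult))"
  unfolding prod_shift1[of "\<lambda>i. H (cons1 y g i)"] by (simp add: cons1_def)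

lemma Comp_cons:
  assumes r1: "r1 \<in> {1..k}"
  shows "{r' \<in> {1..u} \<rightarrow>\<^sub>E {1..k}. (\<Sum>i=1..Suc u. cons1 r1 r' i) = k} = Comp (k - r1) u"
proof -
  have "r' \<in> {1..u} \<rightarrow>\<^sub>E {1..k} \<and> r1 + (\<Sum>i=1..u. r' i) = k \<longleftrightarrow>
        r' \<in> {1..u} \<rightarrow>\<^sub>E {1..k - r1} \<and> (\<Sum>i=1..u. r' i) = k - r1" for r'
  proof
    assume A: "r' \<in> {1..u} \<rightarrow>\<^sub>E {1..k} \<and> r1 + (\<Sum>i=1..u. r' i) = k"
    have "r' i \<le> k - r1" if "i \<in> {1..u}" for i
    proof -
      have "r' i \<le> sum r' {1..u}" by (rule member_le_sum) (use that in auto)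
      moreover have "r1 + sum r' {1..u} = k" using A by simp
      ultimately show ?thesis by linarith
    qed
    then show "r' \<in> {1..u} \<rightarrow>\<^sub>E {1..k - r1} \<and> (\<Sum>i=1..u. r' i) = k - r1"
      using A by (auto simp: PiE_iff)
  next
    assume A: "r' \<in> {1..u} \<rightarrow>\<^sub>E {1..k - r1} \<and> (\<Sum>i=1..u. r' i) = k - r1"
    then show "r' \<in> {1..u} \<rightarrow>\<^sub>E {1..k} \<and> r1 + (\<Sum>i=1..u. r' i) = k"
      using r1 by (auto simp: PiE_iff)
  qed
  then show ?thesis unfolding Comp_def sum_cons1_val by blast
qed

lemma Js_cons:
  assumes j: "j \<in> {1..n}"
  shows "{J' \<in> {1..u} \<rightarrow>\<^sub>E {1..n}. (\<Sum>i=1..Suc u. cons1 j J' i) \<le> n} = Js (n - j) u"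
proof -
  have "J' \<in> {1..u} \<rightarrow>\<^sub>E {1..n} \<and> j + (\<Sum>i=1..u. J' i) \<le> n \<longleftrightarrow>
        J' \<in> {1..u} \<rightarrow>\<^sub>E {1..n - j} \<and> (\<Sum>i=1..u. J' i) \<le> n - j" for J'
  proof
    assume A: "J' \<in> {1..u} \<rightarrow>\<^sub>E {1..n} \<and> j + (\<Sum>i=1..u. J' i) \<le> n"
    have "J' i \<le> n - j" if "i \<in> {1..u}" for i
    proof -
      have "J' i \<le> sum J' {1..u}" by (rule member_le_sum) (use that in auto)
      moreover have "j + sum J' {1..u} \<le> n" using A by simp
      ultimately show ?thesis by linarith
    qed
    then show "J' \<in> {1..u} \<rightarrow>\<^sub>E {1..n - j} \<and> (\<Sum>i=1..u. J' i) \<le> n - j"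
      using A by (auto simp: PiE_iff)
  next
    assume A: "J' \<in> {1..u} \<rightarrow>\<^sub>E {1..n - j} \<and> (\<Sum>i=1..u. J' i) \<le> n - j"
    then show "J' \<in> {1..u} \<rightarrow>\<^sub>E {1..n} \<and> j + (\<Sum>i=1..u. J' i) \<le> n"
      using j by (auto simp: PiE_iff)
  qed
  then show ?thesis unfolding Js_def sum_cons1_val by blast
qed

lemma Bc_cons:
  "Bc k (Suc u) (cons1 r1 r') = real ((k - 1) choose (r1 - 1)) * Bc (k - r1) u r'"
proof -
  have "Bc k (Suc u) (cons1 r1 r') = real ((k - 1) choose (r1 - 1)) *
     (\<Prod>i=1..u. real ((k - (\<Sum>l=1..<Suc i. cons1 r1 r' l) - 1) choose (cons1 r1 r' (Suc i) - 1)))"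
    unfolding Bc_def prod_shift1 by simp
  also have "(\<Prod>i=1..u. real ((k - (\<Sum>l=1..<Suc i. cons1 r1 r' l) - 1) choose (cons1 r1 r' (Suc i) - 1)))
      = Bc (k - r1) u r'"
    unfolding Bc_def
  proof (rule prod.cong[OF refl])
    fix i assume "i \<in> {1..u}"
    then have i: "i \<ge> 1" by simp
    show "real ((k - (\<Sum>l=1..<Suc i. cons1 r1 r' l) - 1) choose (cons1 r1 r' (Suc i) - 1)) =
          real ((k - r1 - (\<Sum>l=1..<i. r' l) - 1) choose (r' i - 1))"
      using i by (subst prefix_cons1[OF i]) (simp add: diff_diff_left)
  qed
  finally show ?thesis .
qed

lemma Tm_cons:
  assumes j: "j \<in> {1..n}" and J': "(\<Sum>i=1..u. J' i) \<le> n - j"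
  shows "Tm a \<theta> n (Suc u) (cons1 r1 r') (cons1 j J') =
     real (n choose j) * fact (j - 1) * falling (a j) r1 * Tm a \<theta> (n - j) u r' J'"
proof -
  define P where "P = (\<Prod>i=1..u. falling (a (J' i)) (r' i))"
  define Q where "Q = (\<Prod>i=1..u. real (J' i))"
  define s where "s = (\<Sum>i=1..u. J' i)"
  have P1: "(\<Prod>i=1..Suc u. falling (a (cons1 j J' i)) (cons1 r1 r' i)) = falling (a j) r1 * P"
    unfolding P_def using prod_cons1_val[where H="\<lambda>p q. falling (a q) p" and u=u and x=r1 and f=r' and y=j and g=J'] by simp
  have Q1: "(\<Prod>i=1..Suc u. real (cons1 j J' i)) = real j * Q"
    unfolding Q_def using prod_cons1_val1[where H="\<lambda>q. real q" and u=u and y=j and g=J'] by simp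
  have s1: "(\<Sum>i=1..Suc u. cons1 j J' i) = j + s" unfolding s_def by (rule sum_cons1_val)
  have ns: "n - (j + s) = n - j - s" by simp
  have jn: "j \<le> n" "j \<ge> 1" using j by auto
  have key: "real (n choose j) * fact (j - 1) * fact (n - j) = fact n / real j"
  proof -
    have "real (fact j * fact (n - j) * (n choose j)) = real (fact n)"
      using binomial_fact_lemma[OF jn(1)] by (simp only:)
    then have e: "real (n choose j) * fact j * fact (n - j) = fact n"
      by (simp only: of_nat_mult of_nat_fact mult_ac)
    have fj: "(fact j :: real) = real j * fact (j - 1)" using jn(2)
      by (cases j) auto
    have j0: "real j \<noteq> 0" using jn(2) by simp
    have "real (n choose j) * fact (j - 1) * fact (n - j) * real j = fact n"
      using e unfolding fj by (simp add: mult_ac)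
    then show ?thesis using j0 by (simp add: eq_divide_eq)
  qed
  have "Tm a \<theta> n (Suc u) (cons1 r1 r') (cons1 j J') =
     falling (a j) r1 * P / (real j * Q) * (fact n / fact (n - j - s)) * pochhammer \<theta> (n - j - s)"
    unfolding Tm_def P1 Q1 s1 ns ..
  also have "\<dots> = (fact n / real j) * falling (a j) r1 * (P / Q * (1 / fact (n - j - s)) * pochhammer \<theta> (n - j - s))"
    by (simp add: divide_inverse inverse_mult_distrib mult_ac)
  also have "\<dots> = real (n choose j) * fact (j - 1) * falling (a j) r1 * (P / Q * (fact (n - j) / fact (n - j - s)) * pochhammer \<theta> (n - j - s))"
    unfolding key[symmetric] by (simp add: divide_inverse inverse_mult_distrib mult_ac)
  also have "\<dots> = real (n choose j) * fact (j - 1) * falling (a j) r1 * Tm a \<theta> (n - j) u r' J'"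
    unfolding Tm_def P_def Q_def s_def ..
  finally show ?thesis .
qed

lemma V_Suc:
  "V a \<theta> n k (Suc u) = (\<Sum>r1=1..k. real ((k - 1) choose (r1 - 1)) *
     (\<Sum>j=1..n. real (n choose j) * fact (j - 1) * falling (a j) r1 * V a \<theta> (n - j) (k - r1) u))"
proof -
  have "V a \<theta> n k (Suc u) = (\<Sum>r1\<in>{1..k}. \<Sum>r'\<in>{r' \<in> {1..u} \<rightarrow>\<^sub>E {1..k}. (\<Sum>i=1..Suc u. cons1 r1 r' i) = k}.
      Bc k (Suc u) (cons1 r1 r') * (\<Sum>J\<in>Js n (Suc u). Tm a \<theta> n (Suc u) (cons1 r1 r') J))"
    unfolding V_def Comp_def by (rule sum_cons1) simp
  also have "\<dots> = (\<Sum>r1\<in>{1..k}. \<Sum>r'\<in>Comp (k - r1) u.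
      real ((k - 1) choose (r1 - 1)) * Bc (k - r1) u r' *
      (\<Sum>j\<in>{1..n}. \<Sum>J'\<in>Js (n - j) u. real (n choose j) * fact (j - 1) * falling (a j) r1 * Tm a \<theta> (n - j) u r' J'))"
  proof (rule sum.cong[OF refl])
    fix r1 assume r1: "r1 \<in> {1..k}"
    show "(\<Sum>r'\<in>{r' \<in> {1..u} \<rightarrow>\<^sub>E {1..k}. (\<Sum>i=1..Suc u. cons1 r1 r' i) = k}.
      Bc k (Suc u) (cons1 r1 r') * (\<Sum>J\<in>Js n (Suc u). Tm a \<theta> n (Suc u) (cons1 r1 r') J)) =
      (\<Sum>r'\<in>Comp (k - r1) u.
      real ((k - 1) choose (r1 - 1)) * Bc (k - r1) u r' *
      (\<Sum>j\<in>{1..n}. \<Sum>J'\<in>Js (n - j) u. real (n choose j) * fact (j - 1) * falling (a j) r1 * Tm a \<theta> (n - j) u r' J'))"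
      unfolding Comp_cons[OF r1]
    proof (rule sum.cong[OF refl])
      fix r' assume "r' \<in> Comp (k - r1) u"
      have "(\<Sum>J\<in>Js n (Suc u). Tm a \<theta> n (Suc u) (cons1 r1 r') J) =
          (\<Sum>j\<in>{1..n}. \<Sum>J'\<in>{J' \<in> {1..u} \<rightarrow>\<^sub>E {1..n}. (\<Sum>i=1..Suc u. cons1 j J' i) \<le> n}.
             Tm a \<theta> n (Suc u) (cons1 r1 r') (cons1 j J'))"
        unfolding Js_def by (rule sum_cons1) simp
      also have "\<dots> = (\<Sum>j\<in>{1..n}. \<Sum>J'\<in>Js (n - j) u. real (n choose j) * fact (j - 1) * falling (a j) r1 * Tm a \<theta> (n - j) u r' J')"
      proof (rule sum.cong[OF refl])
        fix j assume j: "j \<in> {1..n}"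
        show "(\<Sum>J'\<in>{J' \<in> {1..u} \<rightarrow>\<^sub>E {1..n}. (\<Sum>i=1..Suc u. cons1 j J' i) \<le> n}.
             Tm a \<theta> n (Suc u) (cons1 r1 r') (cons1 j J')) =
             (\<Sum>J'\<in>Js (n - j) u. real (n choose j) * fact (j - 1) * falling (a j) r1 * Tm a \<theta> (n - j) u r' J')"
          unfolding Js_cons[OF j]
        proof (rule sum.cong[OF refl])
          fix J' assume "J' \<in> Js (n - j) u"
          then have "(\<Sum>i=1..u. J' i) \<le> n - j" by (simp add: Js_def)
          then show "Tm a \<theta> n (Suc u) (cons1 r1 r') (cons1 j J') =
             real (n choose j) * fact (j - 1) * falling (a j) r1 * Tm a \<theta> (n - j) u r' J'"
            by (rule Tm_cons[OF j])
        qed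
      qed
      finally show "Bc k (Suc u) (cons1 r1 r') * (\<Sum>J\<in>Js n (Suc u). Tm a \<theta> n (Suc u) (cons1 r1 r') J) =
        real ((k - 1) choose (r1 - 1)) * Bc (k - r1) u r' *
        (\<Sum>j\<in>{1..n}. \<Sum>J'\<in>Js (n - j) u. real (n choose j) * fact (j - 1) * falling (a j) r1 * Tm a \<theta> (n - j) u r' J')"
        by (simp add: Bc_cons)
    qed
  qed
  also have "\<dots> = (\<Sum>r1=1..k. real ((k - 1) choose (r1 - 1)) *
     (\<Sum>j=1..n. real (n choose j) * fact (j - 1) * falling (a j) r1 * V a \<theta> (n - j) (k - r1) u))"
  proof (rule sum.cong[OF refl])
    fix r1
    have "(\<Sum>r'\<in>Comp (k - r1) u.
      real ((k - 1) choose (r1 - 1)) * Bc (k - r1) u r' *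
      (\<Sum>j\<in>{1..n}. \<Sum>J'\<in>Js (n - j) u. real (n choose j) * fact (j - 1) * falling (a j) r1 * Tm a \<theta> (n - j) u r' J'))
      = real ((k - 1) choose (r1 - 1)) * (\<Sum>r'\<in>Comp (k - r1) u. \<Sum>j\<in>{1..n}.
          real (n choose j) * fact (j - 1) * falling (a j) r1 * (Bc (k - r1) u r' * (\<Sum>J'\<in>Js (n - j) u. Tm a \<theta> (n - j) u r' J')))"
      by (simp add: sum_distrib_left mult_ac)
    also have "\<dots> = real ((k - 1) choose (r1 - 1)) * (\<Sum>j\<in>{1..n}. \<Sum>r'\<in>Comp (k - r1) u.
          real (n choose j) * fact (j - 1) * falling (a j) r1 * (Bc (k - r1) u r' * (\<Sum>J'\<in>Js (n - j) u. Tm a \<theta> (n - j) u r' J')))"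
      by (subst sum.swap) (rule refl)
    also have "\<dots> = real ((k - 1) choose (r1 - 1)) *
     (\<Sum>j=1..n. real (n choose j) * fact (j - 1) * falling (a j) r1 * V a \<theta> (n - j) (k - r1) u)"
      by (simp add: V_def sum_distrib_left)
    finally show "(\<Sum>r'\<in>Comp (k - r1) u.
      real ((k - 1) choose (r1 - 1)) * Bc (k - r1) u r' *
      (\<Sum>j\<in>{1..n}. \<Sum>J'\<in>Js (n - j) u. real (n choose j) * fact (j - 1) * falling (a j) r1 * Tm a \<theta> (n - j) u r' J'))
      = real ((k - 1) choose (r1 - 1)) *
     (\<Sum>j=1..n. real (n choose j) * fact (j - 1) * falling (a j) r1 * V a \<theta> (n - j) (k - r1) u)" .
  qed
  finally show ?thesis .
qed

definition U :: "(nat \<Rightarrow> real) \<Rightarrow> real \<Rightarrow> nat \<Rightarrow> nat \<Rightarrow> real" where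
  "U a \<theta> n k = (\<Sum>u=0..k. \<theta> ^ u * V a \<theta> n k u)"

lemma V_0: "V a \<theta> n k 0 = (if k = 0 then pochhammer \<theta> n else 0)"
proof -
  have C: "Comp k 0 = (if k = 0 then {\<lambda>_. undefined} else {})" by (auto simp: Comp_def)
  have J: "Js n 0 = {\<lambda>_. undefined}" by (auto simp: Js_def)
  show ?thesis by (simp add: V_def C J Bc_def Tm_def)
qed

lemma V_big: assumes "u > k" shows "V a \<theta> n k u = 0"
proof -
  have "Comp k u = {}"
  proof (rule ccontr)
    assume "Comp k u \<noteq> {}"
    then obtain r where r: "r \<in> {1..u} \<rightarrow>\<^sub>E {1..k}" "(\<Sum>i=1..u. r i) = k" by (auto simp: Comp_def)
    have "(\<Sum>i=1..u. (1::nat)) \<le> (\<Sum>i=1..u. r i)"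
      by (rule sum_mono) (use r(1) in \<open>auto simp: PiE_iff\<close>)
    then show False using r(2) assms by simp
  qed
  then show ?thesis by (simp add: V_def)
qed

lemma U_0: "U a \<theta> n 0 = pochhammer \<theta> n"
  by (simp add: U_def V_0)

lemma U_trunc:
  assumes "m \<le> K"
  shows "(\<Sum>u=0..K. \<theta> ^ u * V a \<theta> n m u) = U a \<theta> n m"
  unfolding U_def
  by (rule sum.mono_neutral_right) (use assms in \<open>auto simp: V_big\<close>)

lemma U_rec:
  assumes k: "k \<ge> 1"
  shows "U a \<theta> n k = \<theta> * (\<Sum>r1=1..k. real ((k - 1) choose (r1 - 1)) *
     (\<Sum>j=1..n. real (n choose j) * fact (j - 1) * falling (a j) r1 * U a \<theta> (n - j) (k - r1)))"
proof -
  obtain m where m: "k = Suc m" using k by (cases k) auto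
  have "U a \<theta> n k = \<theta> ^ 0 * V a \<theta> n k 0 + (\<Sum>u=0..m. \<theta> ^ Suc u * V a \<theta> n k (Suc u))"
    unfolding U_def m by (subst sum.atLeast0_atMost_Suc_shift) simp
  also have "\<theta> ^ 0 * V a \<theta> n k 0 = 0" using k by (simp add: V_0)
  also have "(\<Sum>u=0..m. \<theta> ^ Suc u * V a \<theta> n k (Suc u)) =
     (\<Sum>u=0..m. \<Sum>r1=1..k. \<Sum>j=1..n. \<theta> * (real ((k - 1) choose (r1 - 1)) *
       (real (n choose j) * fact (j - 1) * falling (a j) r1 * (\<theta> ^ u * V a \<theta> (n - j) (k - r1) u))))"
    by (simp add: V_Suc sum_distrib_left mult_ac)
  also have "\<dots> = (\<Sum>r1=1..k. \<Sum>j=1..n. \<Sum>u=0..m. \<theta> * (real ((k - 1) choose (r1 - 1)) *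
       (real (n choose j) * fact (j - 1) * falling (a j) r1 * (\<theta> ^ u * V a \<theta> (n - j) (k - r1) u))))"
    by (subst sum.swap) (subst (2) sum.swap, rule refl)
  also have "\<dots> = (\<Sum>r1=1..k. \<Sum>j=1..n. \<theta> * (real ((k - 1) choose (r1 - 1)) *
       (real (n choose j) * fact (j - 1) * falling (a j) r1 * U a \<theta> (n - j) (k - r1))))"
  proof (intro sum.cong refl)
    fix r1 j assume r1: "r1 \<in> {1..k}"
    have "(\<Sum>u=0..m. \<theta> ^ u * V a \<theta> (n - j) (k - r1) u) = U a \<theta> (n - j) (k - r1)"
      by (rule U_trunc) (use r1 m in auto)
    then show "(\<Sum>u=0..m. \<theta> * (real ((k - 1) choose (r1 - 1)) *
       (real (n choose j) * fact (j - 1) * falling (a j) r1 * (\<theta> ^ u * V a \<theta> (n - j) (k - r1) u)))) =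
       \<theta> * (real ((k - 1) choose (r1 - 1)) *
       (real (n choose j) * fact (j - 1) * falling (a j) r1 * U a \<theta> (n - j) (k - r1)))"
      by (simp add: sum_distrib_left[symmetric])
  qed
  also have "\<dots> = \<theta> * (\<Sum>r1=1..k. real ((k - 1) choose (r1 - 1)) *
     (\<Sum>j=1..n. real (n choose j) * fact (j - 1) * falling (a j) r1 * U a \<theta> (n - j) (k - r1)))"
    by (simp add: sum_distrib_left)
  finally show ?thesis by simp
qed

definition W :: "(nat \<Rightarrow> real) \<Rightarrow> real \<Rightarrow> 'a set \<Rightarrow> nat \<Rightarrow> real" where
  "W a \<theta> S k = (\<Sum>\<sigma>\<in>Perms S. \<theta> ^ card (cyc S \<sigma>) * falling (\<Sum>c\<in>cyc S \<sigma>. a (card c)) k)"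

lemma rec_W:
  assumes S: "finite S" and k: "k \<ge> 1"
  shows "W a \<theta> S k = \<theta> * (\<Sum>r=1..k. real ((k - 1) choose (r - 1)) *
     (\<Sum>c\<in>{c. c \<subseteq> S \<and> c \<noteq> {}}. fact (card c - 1) * falling (a (card c)) r * W a \<theta> (S - c) (k - r)))"
proof -
  define G where "G r c \<sigma> = \<theta> ^ card (cyc S \<sigma>) * falling (a (card c)) r *
      falling (\<Sum>c'\<in>cyc S \<sigma> - {c}. a (card c')) (k - r)" for r c \<sigma>
  have "W a \<theta> S k = (\<Sum>\<sigma>\<in>Perms S. \<Sum>r=1..k. real ((k - 1) choose (r - 1)) * (\<Sum>c\<in>cyc S \<sigma>. G r c \<sigma>))"
    unfolding W_def
  proof (rule sum.cong[OF refl])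
    fix \<sigma> assume "\<sigma> \<in> Perms S"
    have "falling (\<Sum>c\<in>cyc S \<sigma>. a (card c)) k = (\<Sum>r=1..k. real ((k - 1) choose (r - 1)) *
       (\<Sum>c\<in>cyc S \<sigma>. falling (a (card c)) r * falling (\<Sum>c'\<in>cyc S \<sigma> - {c}. a (card c')) (k - r)))"
      by (rule falling_rec[OF finite_cyc[OF S] k])
    then show "\<theta> ^ card (cyc S \<sigma>) * falling (\<Sum>c\<in>cyc S \<sigma>. a (card c)) k =
      (\<Sum>r=1..k. real ((k - 1) choose (r - 1)) * (\<Sum>c\<in>cyc S \<sigma>. G r c \<sigma>))"
      by (simp add: G_def sum_distrib_left mult_ac)
  qed
  also have "\<dots> = (\<Sum>r=1..k. real ((k - 1) choose (r - 1)) * (\<Sum>\<sigma>\<in>Perms S. \<Sum>c\<in>cyc S \<sigma>. G r c \<sigma>))"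
    by (subst sum.swap) (simp add: sum_distrib_left)
  also have "\<dots> = (\<Sum>r=1..k. real ((k - 1) choose (r - 1)) *
     (\<theta> * (\<Sum>c\<in>{c. c \<subseteq> S \<and> c \<noteq> {}}. fact (card c - 1) * falling (a (card c)) r * W a \<theta> (S - c) (k - r))))"
  proof (rule sum.cong[OF refl])
    fix r
    have "(\<Sum>\<sigma>\<in>Perms S. \<Sum>c\<in>cyc S \<sigma>. G r c \<sigma>) =
        (\<Sum>c\<in>{c. c \<subseteq> S \<and> c \<noteq> {}}. \<Sum>\<rho>\<in>CP c. \<Sum>\<tau>\<in>Perms (S - c). G r c (\<rho> \<circ> \<tau>))"
      by (rule extract_cyc[OF S])
    also have "\<dots> = (\<Sum>c\<in>{c. c \<subseteq> S \<and> c \<noteq> {}}. \<theta> * (fact (card c - 1) * falling (a (card c)) r * W a \<theta> (S - c) (k - r)))"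
    proof (rule sum.cong[OF refl])
      fix c assume c: "c \<in> {c. c \<subseteq> S \<and> c \<noteq> {}}"
      then have cS: "c \<subseteq> S" "c \<noteq> {}" by auto
      have fc: "finite c" using cS S finite_subset by auto
      have "(\<Sum>\<rho>\<in>CP c. \<Sum>\<tau>\<in>Perms (S - c). G r c (\<rho> \<circ> \<tau>)) =
          (\<Sum>\<rho>\<in>CP c. \<Sum>\<tau>\<in>Perms (S - c). \<theta> * falling (a (card c)) r *
             (\<theta> ^ card (cyc (S - c) \<tau>) * falling (\<Sum>c'\<in>cyc (S - c) \<tau>. a (card c')) (k - r)))"
      proof (intro sum.cong refl)
        fix \<rho> \<tau> assume "\<rho> \<in> CP c" "\<tau> \<in> Perms (S - c)"
        then have e1: "cyc S (\<rho> \<circ> \<tau>) = insert c (cyc (S - c) \<tau>)" and e2: "c \<notin> cyc (S - c) \<tau>"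
          using glue_facts(2,3)[OF S cS] by auto
        have fin: "finite (cyc (S - c) \<tau>)" using S by (simp add: finite_cyc)
        have e3: "cyc S (\<rho> \<circ> \<tau>) - {c} = cyc (S - c) \<tau>" using e1 e2 by auto
        show "G r c (\<rho> \<circ> \<tau>) = \<theta> * falling (a (card c)) r *
             (\<theta> ^ card (cyc (S - c) \<tau>) * falling (\<Sum>c'\<in>cyc (S - c) \<tau>. a (card c')) (k - r))"
          unfolding G_def e3 using e1 e2 fin by (simp add: mult_ac)
      qed
      also have "\<dots> = real (card (CP c)) * (\<theta> * falling (a (card c)) r * W a \<theta> (S - c) (k - r))"
        by (simp add: W_def sum_distrib_left)
      also have "\<dots> = \<theta> * (fact (card c - 1) * falling (a (card c)) r * W a \<theta> (S - c) (k - r))"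
        using real_card_CP[OF fc cS(2)] by (simp add: mult_ac)
      finally show "(\<Sum>\<rho>\<in>CP c. \<Sum>\<tau>\<in>Perms (S - c). G r c (\<rho> \<circ> \<tau>)) =
          \<theta> * (fact (card c - 1) * falling (a (card c)) r * W a \<theta> (S - c) (k - r))" .
    qed
    also have "\<dots> = \<theta> * (\<Sum>c\<in>{c. c \<subseteq> S \<and> c \<noteq> {}}. fact (card c - 1) * falling (a (card c)) r * W a \<theta> (S - c) (k - r))"
      by (simp add: sum_distrib_left)
    finally show "real ((k - 1) choose (r - 1)) * (\<Sum>\<sigma>\<in>Perms S. \<Sum>c\<in>cyc S \<sigma>. G r c \<sigma>) =
      real ((k - 1) choose (r - 1)) *
     (\<theta> * (\<Sum>c\<in>{c. c \<subseteq> S \<and> c \<noteq> {}}. fact (card c - 1) * falling (a (card c)) r * W a \<theta> (S - c) (k - r)))"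
      by simp
  qed
  also have "\<dots> = \<theta> * (\<Sum>r=1..k. real ((k - 1) choose (r - 1)) *
     (\<Sum>c\<in>{c. c \<subseteq> S \<and> c \<noteq> {}}. fact (card c - 1) * falling (a (card c)) r * W a \<theta> (S - c) (k - r)))"
    by (simp add: sum_distrib_left mult_ac)
  finally show ?thesis .
qed

lemma W_U_aux:
  "\<forall>S::'a set. finite S \<longrightarrow> W a \<theta> S k = U a \<theta> (card S) k"
proof (induction k rule: less_induct)
  case (less k)
  show ?case
  proof (intro allI impI)
    fix S :: "'a set" assume S: "finite S"
    show "W a \<theta> S k = U a \<theta> (card S) k"
    proof (cases "k = 0")
      case True
      then show ?thesis using S0[OF S, of \<theta>] by (simp add: W_def U_0)
    next
      case False
      then have k: "k \<ge> 1" by simp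
      define n where "n = card S"
      have "W a \<theta> S k = \<theta> * (\<Sum>r=1..k. real ((k - 1) choose (r - 1)) *
         (\<Sum>c\<in>{c. c \<subseteq> S \<and> c \<noteq> {}}. fact (card c - 1) * falling (a (card c)) r * W a \<theta> (S - c) (k - r)))"
        by (rule rec_W[OF S k])
      also have "\<dots> = \<theta> * (\<Sum>r=1..k. real ((k - 1) choose (r - 1)) *
         (\<Sum>j=1..n. real (n choose j) * fact (j - 1) * falling (a j) r * U a \<theta> (n - j) (k - r)))"
      proof (intro arg_cong[where f="\<lambda>x. \<theta> * x"] sum.cong refl arg_cong[where f="\<lambda>x. real ((k - 1) choose (r - 1)) * x" for r])
        fix r assume r: "r \<in> {1..k}"
        have "(\<Sum>c\<in>{c. c \<subseteq> S \<and> c \<noteq> {}}. fact (card c - 1) * falling (a (card c)) r * W a \<theta> (S - c) (k - r))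
          = (\<Sum>c\<in>{c. c \<subseteq> S \<and> c \<noteq> {}}. (\<lambda>j. fact (j - 1) * falling (a j) r * U a \<theta> (n - j) (k - r)) (card c))"
        proof (rule sum.cong[OF refl])
          fix c assume c: "c \<in> {c. c \<subseteq> S \<and> c \<noteq> {}}"
          then have fc: "finite c" "c \<subseteq> S" using S finite_subset by auto
          have lt: "k - r < k" using r k by auto
          have "W a \<theta> (S - c) (k - r) = U a \<theta> (card (S - c)) (k - r)"
            using less.IH[OF lt] S by blast
          also have "card (S - c) = n - card c" using card_Diff_subset[OF fc(1,2)] n_def by simp
          finally show "fact (card c - 1) * falling (a (card c)) r * W a \<theta> (S - c) (k - r) =
             (\<lambda>j. fact (j - 1) * falling (a j) r * U a \<theta> (n - j) (k - r)) (card c)" by simp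
        qed
        also have "\<dots> = (\<Sum>j=1..n. real (n choose j) * (fact (j - 1) * falling (a j) r * U a \<theta> (n - j) (k - r)))"
          unfolding n_def by (rule sum_nonempty_card[OF S])
        finally show "(\<Sum>c\<in>{c. c \<subseteq> S \<and> c \<noteq> {}}. fact (card c - 1) * falling (a (card c)) r * W a \<theta> (S - c) (k - r))
          = (\<Sum>j=1..n. real (n choose j) * fact (j - 1) * falling (a j) r * U a \<theta> (n - j) (k - r))"
          by (simp add: mult_ac)
      qed
      also have "\<dots> = U a \<theta> n k" by (rule U_rec[OF k, symmetric])
      finally show ?thesis by (simp add: n_def)
    qed
  qed
qed

lemma W_U: "finite S \<Longrightarrow> W a \<theta> S k = U a \<theta> (card S) k"
  using W_U_aux by blast

lemma h_cyc:
  assumes s: "\<sigma> \<in> Sn n"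
  shows "(\<Sum>j=1..n. a j * real (kcyc n j \<sigma>)) = (\<Sum>c\<in>cyc {1..n} \<sigma>. a (card c))"
proof -
  have sp: "\<sigma> permutes {1..n}" using s by (simp add: Sn_def)
  have C: "cycles_of n \<sigma> = cyc {1..n} \<sigma>" by (simp add: cycles_of_def cyc_def)
  have fin: "finite (cyc {1..n} \<sigma>)" by (simp add: finite_cyc)
  have cards: "card ` cyc {1..n} \<sigma> \<subseteq> {1..n}"
  proof
    fix j assume "j \<in> card ` cyc {1..n} \<sigma>"
    then obtain x where x: "x \<in> {1..n}" "j = card (orbit \<sigma> x)" by (auto simp: cyc_def)
    have sub: "orbit \<sigma> x \<subseteq> {1..n}" by (rule permutes_orbit_subset[OF sp x(1)])
    have ne: "orbit \<sigma> x \<noteq> {}" by (rule orbit_nonempty)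
    have fo: "finite (orbit \<sigma> x)" using sub finite_subset by blast
    have "card (orbit \<sigma> x) \<le> n" using card_mono[OF _ sub] by simp
    moreover have "card (orbit \<sigma> x) \<ge> 1" using ne fo by (simp add: Suc_le_eq card_gt_0_iff)
    ultimately show "j \<in> {1..n}" using x(2) by simp
  qed
  have "(\<Sum>c\<in>cyc {1..n} \<sigma>. a (card c)) = (\<Sum>j\<in>{1..n}. \<Sum>c\<in>{c \<in> cyc {1..n} \<sigma>. card c = j}. a (card c))"
    by (rule sum.group[symmetric, OF fin _ cards]) simp
  also have "\<dots> = (\<Sum>j=1..n. a j * real (kcyc n j \<sigma>))"
  proof (rule sum.cong[OF refl])
    fix j
    have "(\<Sum>c\<in>{c \<in> cyc {1..n} \<sigma>. card c = j}. a (card c)) = (\<Sum>c\<in>{c \<in> cyc {1..n} \<sigma>. card c = j}. a j)"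
      by (rule sum.cong) auto
    then show "(\<Sum>c\<in>{c \<in> cyc {1..n} \<sigma>. card c = j}. a (card c)) = a j * real (kcyc n j \<sigma>)"
      by (simp add: kcyc_def C mult.commute)
  qed
  finally show ?thesis by simp
qed

theorem lemma2:
  fixes \<theta> :: real and n k :: nat and a :: "nat \<Rightarrow> real" and h :: "(nat \<Rightarrow> nat) \<Rightarrow> real"
  assumes "\<theta> > 0"
    and "k \<ge> 1"
    and "\<And>\<sigma>. h \<sigma> = (\<Sum>j=1..n. a j * real (kcyc n j \<sigma>))"
  shows "ewens_E \<theta> n (\<lambda>\<sigma>. falling (h \<sigma>) k) =
    (\<Sum>u=1..k. \<theta> ^ u *
      (\<Sum>r\<in>{r \<in> {1..u} \<rightarrow>\<^sub>E {1..k}. (\<Sum>i=1..u. r i) = k}.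
         (\<Prod>i=1..u. (k - (\<Sum>l=1..<i. r l) - 1) choose (r i - 1)) *
         (\<Sum>J\<in>{J \<in> {1..u} \<rightarrow>\<^sub>E {1..n}. (\<Sum>i=1..u. J i) \<le> n}.
            (\<Prod>i=1..u. falling (a (J i)) (r i)) / (\<Prod>i=1..u. real (J i))
            * psi \<theta> n (n - (\<Sum>i=1..u. J i)))))"
proof -
  have pn: "pochhammer \<theta> n > 0" using assms(1) by (rule pochhammer_pos)
  have num: "(\<Sum>\<sigma>\<in>Sn n. \<theta> ^ wcyc n \<sigma> * falling (h \<sigma>) k) = U a \<theta> n k"
  proof -
    have "(\<Sum>\<sigma>\<in>Sn n. \<theta> ^ wcyc n \<sigma> * falling (h \<sigma>) k) = W a \<theta> {1..n} k"
      unfolding W_def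
    proof (rule sum.cong)
      show "Sn n = Perms {1..n}" by (simp add: Sn_def)
      fix \<sigma> assume "\<sigma> \<in> Perms {1..n}"
      then have "\<sigma> \<in> Sn n" by (simp add: Sn_def)
      then show "\<theta> ^ wcyc n \<sigma> * falling (h \<sigma>) k =
          \<theta> ^ card (cyc {1..n} \<sigma>) * falling (\<Sum>c\<in>cyc {1..n} \<sigma>. a (card c)) k"
        using h_cyc[of \<sigma> n a] assms(3)[of \<sigma>] by (simp add: wcyc_def cycles_of_def cyc_def)
    qed
    also have "\<dots> = U a \<theta> n k" using W_U[of "{1..n}" a \<theta> k] by simp
    finally show ?thesis .
  qed
  have U1: "U a \<theta> n k = (\<Sum>u=1..k. \<theta> ^ u * V a \<theta> n k u)"
  proof -
    have "{0..k} = insert 0 {1..k}" by auto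
    then show ?thesis using assms(2) by (simp add: U_def V_0)
  qed
  have "ewens_E \<theta> n (\<lambda>\<sigma>. falling (h \<sigma>) k) = (\<Sum>u=1..k. \<theta> ^ u * (V a \<theta> n k u / pochhammer \<theta> n))"
    unfolding ewens_E_def num U1 by (simp add: sum_divide_distrib)
  also have "\<dots> = (\<Sum>u=1..k. \<theta> ^ u *
      (\<Sum>r\<in>{r \<in> {1..u} \<rightarrow>\<^sub>E {1..k}. (\<Sum>i=1..u. r i) = k}.
         (\<Prod>i=1..u. (k - (\<Sum>l=1..<i. r l) - 1) choose (r i - 1)) *
         (\<Sum>J\<in>{J \<in> {1..u} \<rightarrow>\<^sub>E {1..n}. (\<Sum>i=1..u. J i) \<le> n}.
            (\<Prod>i=1..u. falling (a (J i)) (r i)) / (\<Prod>i=1..u. real (J i))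
            * psi \<theta> n (n - (\<Sum>i=1..u. J i)))))"
  proof (rule sum.cong[OF refl])
    fix u
    have "V a \<theta> n k u / pochhammer \<theta> n = (\<Sum>r\<in>Comp k u. Bc k u r * (\<Sum>J\<in>Js n u. Tm a \<theta> n u r J / pochhammer \<theta> n))"
      by (simp add: V_def sum_divide_distrib sum_distrib_left)
    also have "\<dots> = (\<Sum>r\<in>{r \<in> {1..u} \<rightarrow>\<^sub>E {1..k}. (\<Sum>i=1..u. r i) = k}.
         (\<Prod>i=1..u. (k - (\<Sum>l=1..<i. r l) - 1) choose (r i - 1)) *
         (\<Sum>J\<in>{J \<in> {1..u} \<rightarrow>\<^sub>E {1..n}. (\<Sum>i=1..u. J i) \<le> n}.
            (\<Prod>i=1..u. falling (a (J i)) (r i)) / (\<Prod>i=1..u. real (J i))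
            * psi \<theta> n (n - (\<Sum>i=1..u. J i))))"
      unfolding Comp_def Js_def
    proof (intro sum.cong refl)
      fix r
      show "Bc k u r * (\<Sum>J\<in>{J \<in> {1..u} \<rightarrow>\<^sub>E {1..n}. (\<Sum>i=1..u. J i) \<le> n}. Tm a \<theta> n u r J / pochhammer \<theta> n) =
         (\<Prod>i=1..u. (k - (\<Sum>l=1..<i. r l) - 1) choose (r i - 1)) *
         (\<Sum>J\<in>{J \<in> {1..u} \<rightarrow>\<^sub>E {1..n}. (\<Sum>i=1..u. J i) \<le> n}.
            (\<Prod>i=1..u. falling (a (J i)) (r i)) / (\<Prod>i=1..u. real (J i))
            * psi \<theta> n (n - (\<Sum>i=1..u. J i)))"
      proof (rule arg_cong2[where f="(*)"])
        show "Bc k u r = (\<Prod>i=1..u. (k - (\<Sum>l=1..<i. r l) - 1) choose (r i - 1))"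
          by (simp add: Bc_def)
        show "(\<Sum>J\<in>{J \<in> {1..u} \<rightarrow>\<^sub>E {1..n}. (\<Sum>i=1..u. J i) \<le> n}. Tm a \<theta> n u r J / pochhammer \<theta> n) =
          (\<Sum>J\<in>{J \<in> {1..u} \<rightarrow>\<^sub>E {1..n}. (\<Sum>i=1..u. J i) \<le> n}.
            (\<Prod>i=1..u. falling (a (J i)) (r i)) / (\<Prod>i=1..u. real (J i))
            * psi \<theta> n (n - (\<Sum>i=1..u. J i)))"
        proof (rule sum.cong[OF refl])
          fix J
          show "Tm a \<theta> n u r J / pochhammer \<theta> n =
            (\<Prod>i=1..u. falling (a (J i)) (r i)) / (\<Prod>i=1..u. real (J i))
            * psi \<theta> n (n - (\<Sum>i=1..u. J i))"
            unfolding Tm_def psi_def using pn by (simp add: divide_inverse mult_ac)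
        qed
      qed
    qed
    finally show "\<theta> ^ u * (V a \<theta> n k u / pochhammer \<theta> n) = \<theta> ^ u *
      (\<Sum>r\<in>{r \<in> {1..u} \<rightarrow>\<^sub>E {1..k}. (\<Sum>i=1..u. r i) = k}.
         (\<Prod>i=1..u. (k - (\<Sum>l=1..<i. r l) - 1) choose (r i - 1)) *
         (\<Sum>J\<in>{J \<in> {1..u} \<rightarrow>\<^sub>E {1..n}. (\<Sum>i=1..u. J i) \<le> n}.
            (\<Prod>i=1..u. falling (a (J i)) (r i)) / (\<Prod>i=1..u. real (J i))
            * psi \<theta> n (n - (\<Sum>i=1..u. J i))))" by simp
  qed
  finally show ?thesis .
qed

end
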